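(* Let $d\ge 1$ and $\ell\ge 3$ be integers. The number of arcs of the cyclic Kautz digraph $CK(d,\ell)$ is $$(d+1)d^{\ell}-(2d-1)\big((-1)^{\ell-1}d+d^{\ell-1}\big).$$
   Context: Let $\Sigma=\{0,1,\dots,d\}$ be an alphabet of $d+1$ symbols. The cyclic Kautz digraph $CK(d,\ell)$ has as vertices all sequences $a_1a_2\ldots a_\ell\in\Sigma^\ell$ with $a_i\neq a_{i+1}$ for $1\le i\le \ell-1$ and $a_1\neq a_\ell$. There is an arc from $a_1\ldots a_\ell$ to $b_1\ldots b_\ell$ if and only if both are vertices and $b_i=a_{i+1}$ for $1\le i\le \ell-1$. *)

theory Defs
  imports Main
begin

definition ck_vertices :: "nat \<Rightarrow> nat \<Rightarrow> nat list set" where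
  "ck_vertices d l = {a. length a = l \<and> set a \<subseteq> {0..d}
      \<and> (\<forall>i. i + 1 < l \<longrightarrow> a ! i \<noteq> a ! (i + 1))
      \<and> a ! 0 \<noteq> a ! (l - 1)}"

definition ck_arcs :: "nat \<Rightarrow> nat \<Rightarrow> (nat list \<times> nat list) set" where
  "ck_arcs d l = {(a, b). a \<in> ck_vertices d l \<and> b \<in> ck_vertices d l
      \<and> (\<forall>i. i + 1 < l \<longrightarrow> b ! i = a ! (i + 1))}"

end

theory Submission
  imports Defs
begin

fun cd :: "nat list \<Rightarrow> bool" where
  "cd (x # y # r) = (x \<noteq> y \<and> cd (y # r))"
| "cd _ = True"

lemma cd_nth: "cd w = (\<forall>i. Suc i < length w \<longrightarrow> w ! i \<noteq> w ! Suc i)"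
proof (induction w rule: cd.induct)
  case (1 x y r)
  show ?case
  proof
    assume "cd (x # y # r)"
    then show "\<forall>i. Suc i < length (x # y # r) \<longrightarrow> (x # y # r) ! i \<noteq> (x # y # r) ! Suc i"
      using 1 by (auto simp: nth_Cons split: nat.splits)
  next
    assume h: "\<forall>i. Suc i < length (x # y # r) \<longrightarrow> (x # y # r) ! i \<noteq> (x # y # r) ! Suc i"
    have "x \<noteq> y" using h[rule_format, of 0] by simp
    moreover have "\<forall>i. Suc i < length (y # r) \<longrightarrow> (y # r) ! i \<noteq> (y # r) ! Suc i"
      using h by (metis Suc_less_eq length_Cons nth_Cons_Suc)
    ultimately show "cd (x # y # r)" using 1 by simp
  qed
qed auto

lemma cd_Cons: "m \<noteq> [] \<Longrightarrow> cd (x # m) = (x \<noteq> hd m \<and> cd m)"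
  by (cases m) auto

lemma cd_snoc: "cd (m @ [v]) = (cd m \<and> (m \<noteq> [] \<longrightarrow> last m \<noteq> v))"
  by (induction m rule: cd.induct) auto

lemma ck_vertices_alt:
  assumes "l \<ge> 1"
  shows "ck_vertices d l = {a. length a = l \<and> set a \<subseteq> {0..d} \<and> cd a \<and> hd a \<noteq> last a}"
proof -
  have h: "\<And>a. length a = l \<Longrightarrow> a ! 0 = hd a \<and> a ! (l - 1) = last a"
    using assms by (metis One_nat_def hd_conv_nth last_conv_nth le_numeral_extra(2) list.size(3) not_one_le_zero)
  then show ?thesis unfolding ck_vertices_def cd_nth
  proof (intro Collect_cong)
    fix a show "(length a = l \<and> set a \<subseteq> {0..d} \<and> (\<forall>i. i + 1 < l \<longrightarrow> a ! i \<noteq> a ! (i + 1)) \<and> a ! 0 \<noteq> a ! (l - 1)) =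
      (length a = l \<and> set a \<subseteq> {0..d} \<and> (\<forall>i. Suc i < length a \<longrightarrow> a ! i \<noteq> a ! Suc i) \<and> hd a \<noteq> last a)"
    proof (cases "length a = l")
      case True
      then have "a ! 0 = hd a" "a ! (l - 1) = last a" using h by auto
      then show ?thesis using True by simp
    next
      case False
      then show ?thesis by simp
    qed
  qed
qed

definition cdl :: "nat \<Rightarrow> nat \<Rightarrow> nat list set" where
  "cdl d n = {w. length w = n \<and> set w \<subseteq> {0..d} \<and> cd w}"

definition cl :: "nat \<Rightarrow> nat \<Rightarrow> nat list set" where
  "cl d n = cdl d n \<inter> {w. hd w = last w}"

definition op :: "nat \<Rightarrow> nat \<Rightarrow> nat list set" where
  "op d n = cdl d n \<inter> - {w. hd w = last w}"

lemma finite_cdl: "finite (cdl d n)"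
proof -
  have "cdl d n \<subseteq> {xs. set xs \<subseteq> {0..d} \<and> length xs = n}" unfolding cdl_def by auto
  moreover have "finite {xs. set xs \<subseteq> {0..d} \<and> length xs = n}"
    by (rule finite_lists_length_eq) simp
  ultimately show ?thesis by (rule finite_subset)
qed

lemma card_cdl: "card (cdl d (Suc n)) = (d + 1) * d ^ n"
proof (induction n)
  case 0
  have "cdl d 1 = (\<lambda>x. [x]) ` {0..d}"
  proof
    show "cdl d 1 \<subseteq> (\<lambda>x. [x]) ` {0..d}"
    proof
      fix w assume "w \<in> cdl d 1"
      then obtain x where "w = [x]" "x \<in> {0..d}" unfolding cdl_def
        by (auto simp: length_Suc_conv)
      then show "w \<in> (\<lambda>x. [x]) ` {0..d}" by auto
    qed
  qed (auto simp: cdl_def)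
  then show ?case by (simp add: card_image inj_on_def)
next
  case (Suc n)
  let ?T = "Sigma (cdl d (Suc n)) (\<lambda>w. {0..d} - {hd w})"
  have bij: "bij_betw (\<lambda>(w, z). z # w) ?T (cdl d (Suc (Suc n)))"
  proof (rule bij_betwI')
    fix u assume "u \<in> cdl d (Suc (Suc n))"
    then obtain z w where u: "u = z # w" and w: "length w = Suc n" and s: "set u \<subseteq> {0..d}" and c: "cd u"
      unfolding cdl_def by (auto simp: length_Suc_conv)
    have "w \<noteq> []" using w by auto
    then have "z \<noteq> hd w" "cd w" using c u cd_Cons by auto
    then show "\<exists>x\<in>?T. u = (case x of (w, z) \<Rightarrow> z # w)"
      using u w s by (intro bexI[of _ "(w, z)"]) (auto simp: cdl_def)
  next
    fix x assume "x \<in> ?T"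
    obtain w z where x: "x = (w, z)" by (cases x)
    with \<open>x \<in> ?T\<close> have w: "w \<in> cdl d (Suc n)" and z: "z \<in> {0..d}" "z \<noteq> hd w" by auto
    have "w \<noteq> []" using w by (auto simp: cdl_def)
    then show "(case x of (w, z) \<Rightarrow> z # w) \<in> cdl d (Suc (Suc n))"
      using x w z cd_Cons by (auto simp: cdl_def)
  qed auto
  have "card ?T = (\<Sum>w\<in>cdl d (Suc n). card ({0..d} - {hd w}))"
    using finite_cdl by (intro card_SigmaI) auto
  also have "\<dots> = (\<Sum>w\<in>cdl d (Suc n). d)"
  proof (rule sum.cong)
    fix w assume "w \<in> cdl d (Suc n)"
    then have wn: "w \<noteq> []" and ws: "set w \<subseteq> {0..d}" unfolding cdl_def by auto
    then have "hd w \<in> set w" by simp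
    then have "hd w \<in> {0..d}" using ws by blast
    then show "card ({0..d} - {hd w}) = d" by simp
  qed simp
  finally have "card ?T = card (cdl d (Suc n)) * d" by simp
  then show ?case using bij_betw_same_card[OF bij] Suc by (simp add: algebra_simps)
qed

lemma card_cl_op: "card (cl d n) + card (op d n) = card (cdl d n)"
  unfolding cl_def op_def
  by (metis Int_Diff_Un Int_Diff_disjoint Diff_eq card_Un_disjoint finite_Int finite_cdl)

lemma card_cl_step: "card (cl d (Suc (Suc n))) = card (op d (Suc n))"
proof -
  have "bij_betw (\<lambda>w. last w # w) (op d (Suc n)) (cl d (Suc (Suc n)))"
  proof (rule bij_betwI')
    fix u assume "u \<in> cl d (Suc (Suc n))"
    then obtain z w where u: "u = z # w" and w: "length w = Suc n" and s: "set u \<subseteq> {0..d}" and c: "cd u"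
      and hl: "hd u = last u"
      unfolding cl_def cdl_def by (auto simp: length_Suc_conv)
    have "w \<noteq> []" using w by auto
    then have "z \<noteq> hd w" "cd w" "z = last w" using c u cd_Cons hl by auto
    then show "\<exists>x\<in>op d (Suc n). u = last x # x"
      using u w s by (intro bexI[of _ w]) (auto simp: op_def cdl_def)
  next
    fix w assume w: "w \<in> op d (Suc n)"
    have "w \<noteq> []" using w by (auto simp: op_def cdl_def)
    moreover have "last w \<in> set w" using \<open>w \<noteq> []\<close> by simp
    then have "last w \<le> d" using w unfolding op_def cdl_def by auto
    ultimately show "last w # w \<in> cl d (Suc (Suc n))"
      using w cd_Cons by (auto simp: cl_def op_def cdl_def)
  qed auto
  then show ?thesis by (metis bij_betw_same_card)
qed

lemma card_cl: "int (card (cl d (Suc n))) = int d ^ n + (-1) ^ n * int d"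
proof (induction n)
  case 0
  have "cl d 1 = cdl d 1" unfolding cl_def cdl_def by (auto simp: length_Suc_conv)
  then show ?case using card_cdl[of d 0] by simp
next
  case (Suc n)
  have "int (card (cl d (Suc (Suc n)))) = int (card (cdl d (Suc n))) - int (card (cl d (Suc n)))"
    using card_cl_step[of d n] card_cl_op[of d "Suc n"] by simp
  also have "\<dots> = (int d + 1) * int d ^ n - (int d ^ n + (-1) ^ n * int d)"
  proof -
    have "int (card (cdl d (Suc n))) = (int d + 1) * int d ^ n"
      using card_cdl[of d n] by (simp add: algebra_simps)
    then show ?thesis using Suc by simp
  qed
  finally show ?case by (simp add: algebra_simps)
qed

theorem proposition2:
  fixes d l :: nat
  assumes "d \<ge> 1" and "l \<ge> 3"
  shows "int (card (ck_arcs d l)) =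
    (int d + 1) * int d ^ l - (2 * int d - 1) * ((-1) ^ (l - 1) * int d + int d ^ (l - 1))"
proof -
  define k where "k = l - 2"
  have l: "l = Suc (Suc k)" and lk: "l - 1 = Suc k" using assms(2) unfolding k_def by auto
  define B where "B m = {0..d} - {hd m, last m}" for m :: "nat list"
  let ?T = "Sigma (cdl d (Suc k)) (\<lambda>m. B m \<times> B m)"
  have V: "ck_vertices d l = {a. length a = l \<and> set a \<subseteq> {0..d} \<and> cd a \<and> hd a \<noteq> last a}"
    using assms(2) by (intro ck_vertices_alt) simp
  have bij: "bij_betw (\<lambda>(m, (x, v)). (x # m, m @ [v])) ?T (ck_arcs d l)"
  proof (rule bij_betwI')
    fix p q assume "p \<in> ?T" "q \<in> ?T"
    show "((case p of (m, x, v) \<Rightarrow> (x # m, m @ [v])) = (case q of (m, x, v) \<Rightarrow> (x # m, m @ [v]))) = (p = q)"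
      by (cases p; cases q) auto
  next
    fix p assume p: "p \<in> ?T"
    obtain m x v where pe: "p = (m, (x, v))" by (cases p) auto
    with p have m: "m \<in> cdl d (Suc k)" and x: "x \<in> B m" and v: "v \<in> B m" by auto
    have mn: "m \<noteq> []" and ml: "length m = Suc k" and ms: "set m \<subseteq> {0..d}" and mc: "cd m"
      using m unfolding cdl_def by auto
    have xd: "x \<le> d" "x \<noteq> last m" "x \<noteq> hd m" and vd: "v \<le> d" "hd m \<noteq> v" "last m \<noteq> v"
      using x v unfolding B_def by auto
    have "x # m \<in> ck_vertices d l" unfolding V
      using ml l ms xd mn cd_Cons[OF mn] mc by auto
    moreover have "m @ [v] \<in> ck_vertices d l" unfolding V
      using ml l ms vd mn cd_snoc[of m v] mc by auto
    moreover have "\<forall>i. i + 1 < l \<longrightarrow> (m @ [v]) ! i = (x # m) ! (i + 1)"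
      using ml l by (auto simp: nth_append)
    ultimately have "(x # m, m @ [v]) \<in> ck_arcs d l" unfolding ck_arcs_def by simp
    then show "(case p of (m, x, v) \<Rightarrow> (x # m, m @ [v])) \<in> ck_arcs d l" using pe by simp
  next
    fix ab assume ab: "ab \<in> ck_arcs d l"
    obtain a b where abe: "ab = (a, b)" by (cases ab)
    with ab have a: "length a = l" "set a \<subseteq> {0..d}" "cd a" "hd a \<noteq> last a"
      and b: "length b = l" "set b \<subseteq> {0..d}" "cd b" "hd b \<noteq> last b"
      and arc: "\<forall>i. i + 1 < l \<longrightarrow> b ! i = a ! (i + 1)"
      unfolding ck_arcs_def V by auto
    obtain x m where am: "a = x # m" using a(1) l by (cases a) auto
    have ml: "length m = Suc k" using a(1) am l by simp
    have mn: "m \<noteq> []" using ml by auto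
    define v where "v = last b"
    have bn: "b \<noteq> []" using b(1) l by auto
    have "butlast b = m"
    proof (rule nth_equalityI)
      show "length (butlast b) = length m" using b(1) ml l by simp
      fix i assume "i < length (butlast b)"
      then have i: "i + 1 < l" using b(1) by simp
      then have "butlast b ! i = b ! i" using b(1) by (simp add: nth_butlast)
      also have "\<dots> = a ! (i + 1)" using arc i by simp
      also have "\<dots> = m ! i" using am by simp
      finally show "butlast b ! i = m ! i" .
    qed
    then have bm: "b = m @ [v]" using bn unfolding v_def by (metis append_butlast_last_id)
    have mc: "cd m" and xm: "x \<noteq> hd m" using a(3) am cd_Cons[OF mn] by auto
    have "m \<in> cdl d (Suc k)" using ml mc a(2) am unfolding cdl_def by auto
    moreover have "x \<in> B m" using a(2,4) am xm mn unfolding B_def by auto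
    moreover have "v \<in> B m"
    proof -
      have "v \<le> d" using b(2) bm by auto
      moreover have "v \<noteq> last m" using b(3) bm cd_snoc mn by auto
      moreover have "v \<noteq> hd m" using b(4) bm mn by auto
      ultimately show ?thesis unfolding B_def by auto
    qed
    ultimately have "(m, (x, v)) \<in> ?T" by auto
    moreover have "ab = (case (m, (x, v)) of (m, x, v) \<Rightarrow> (x # m, m @ [v]))"
      using abe am bm by simp
    ultimately show "\<exists>p\<in>?T. ab = (case p of (m, x, v) \<Rightarrow> (x # m, m @ [v]))" by blast
  qed
  have "card ?T = (\<Sum>m\<in>cdl d (Suc k). card (B m \<times> B m))"
    by (rule card_SigmaI) (auto simp: finite_cdl B_def)
  also have "\<dots> = (\<Sum>m\<in>cdl d (Suc k). if hd m = last m then d * d else (d - 1) * (d - 1))"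
  proof (rule sum.cong)
    fix m assume m: "m \<in> cdl d (Suc k)"
    then have mn: "m \<noteq> []" and ms: "set m \<subseteq> {0..d}" unfolding cdl_def by auto
    have h: "hd m \<in> {0..d}" using mn ms hd_in_set by blast
    have t: "last m \<in> {0..d}" using mn ms last_in_set by blast
    have "card (B m) = (if hd m = last m then d else d - 1)"
    proof (cases "hd m = last m")
      case True
      then show ?thesis using h unfolding B_def by simp
    next
      case False
      have "card (B m) = card {0..d} - card {hd m, last m}"
        unfolding B_def by (rule card_Diff_subset) (use h t in auto)
      then show ?thesis using False by simp
    qed
    then show "card (B m \<times> B m) = (if hd m = last m then d * d else (d - 1) * (d - 1))"
      by (simp add: card_cartesian_product)
  qed simp
  also have "\<dots> = card (cl d (Suc k)) * (d * d) + card (op d (Suc k)) * ((d - 1) * (d - 1))"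
    unfolding sum.If_cases[OF finite_cdl] cl_def op_def by simp
  finally have c: "card (ck_arcs d l) = card (cl d (Suc k)) * (d * d) + card (op d (Suc k)) * ((d - 1) * (d - 1))"
    using bij_betw_same_card[OF bij] by simp
  have co: "int (card (op d (Suc k))) = (int d + 1) * int d ^ k - (int d ^ k + (-1) ^ k * int d)"
  proof -
    have "int (card (cdl d (Suc k))) = (int d + 1) * int d ^ k"
      using card_cdl[of d k] by (simp add: algebra_simps)
    then show ?thesis using card_cl_op[of d "Suc k"] card_cl[of d k] by linarith
  qed
  have dm: "int (d - 1) = int d - 1" using assms(1) by simp
  have "int (card (ck_arcs d l)) = (int d ^ k + (-1) ^ k * int d) * (int d * int d)
      + ((int d + 1) * int d ^ k - (int d ^ k + (-1) ^ k * int d)) * ((int d - 1) * (int d - 1))"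
    using c co card_cl[of d k] dm by (simp del: of_nat_diff)
  also have "\<dots> = (int d + 1) * int d ^ l - (2 * int d - 1) * ((-1) ^ (l - 1) * int d + int d ^ (l - 1))"
    unfolding l by (simp add: algebra_simps power_Suc)
  finally show ?thesis .
qed

end
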